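(* For any optiongraphs $\mathsf{C}$ and $\mathsf{D}$, $(\mathsf{C}+\mathsf{D})/{\bowtie_{\mathsf{C}+\mathsf{D}}}\cong(\mathsf{C}/{\bowtie_\mathsf{C}}+\mathsf{D}/{\bowtie_\mathsf{D}})/{\bowtie_{\mathsf{E}}}$, where $\mathsf{E}:=\mathsf{C}/{\bowtie_\mathsf{C}}+\mathsf{D}/{\bowtie_\mathsf{D}}$.
   Context: An optiongraph is a nonempty set $\mathsf{D}$ of positions with an option function $\mathrm{Opt}_\mathsf{D}:\mathsf{D}\to 2^{\mathsf{D}}$. A map is option preserving if $\mathrm{Opt}_\mathsf{D}(f(p))=f(\mathrm{Opt}_\mathsf{C}(p))$; an isomorphism ($\cong$) is a bijective option-preserving map. For an equivalence relation $\theta$, $[p]_\theta$ is the class of $p$ and $[S]_\theta:=\{[s]_\theta\mid s\in S\}$; $\theta$ is a congruence relation if $p\mathrel{\theta}q$ implies $[\mathrm{Opt}(p)]_\theta=[\mathrm{Opt}(q)]_\theta$. The quotient $\mathsf{D}/\theta$ has positions the $\theta$-classes and $\mathrm{Opt}([p]_\theta):=[\mathrm{Opt}_\mathsf{D}(p)]_\theta$. For an optiongraph $\mathsf{X}$, $\bowtie_\mathsf{X}$ is the union of all congruence relations on $\mathsf{X}$ (the maximum congruence). The sum $\mathsf{C}+\mathsf{D}$ is the optiongraph on $\mathsf{C}\times\mathsf{D}$ with $\mathrm{Opt}_{\mathsf{C}+\mathsf{D}}(p,q):=(\mathrm{Opt}_\mathsf{C}(p)\times\{q\})\cup(\{p\}\times\mathrm{Opt}_\mathsf{D}(q))$.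 *)

theory Defs
  imports Main
begin

definition optiongraph :: "'a set \<Rightarrow> ('a \<Rightarrow> 'a set) \<Rightarrow> bool" where
  "optiongraph V Opt \<longleftrightarrow> V \<noteq> {} \<and> (\<forall>p\<in>V. Opt p \<subseteq> V)"

definition cls :: "'a rel \<Rightarrow> 'a \<Rightarrow> 'a set" where
  "cls \<theta> p = \<theta> `` {p}"

definition congruence_rel :: "'a set \<Rightarrow> ('a \<Rightarrow> 'a set) \<Rightarrow> 'a rel \<Rightarrow> bool" where
  "congruence_rel V Opt \<theta> \<longleftrightarrow> equiv V \<theta> \<and>
     (\<forall>p q. (p, q) \<in> \<theta> \<longrightarrow> cls \<theta> ` Opt p = cls \<theta> ` Opt q)"

definition maxcong :: "'a set \<Rightarrow> ('a \<Rightarrow> 'a set) \<Rightarrow> 'a rel" where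
  "maxcong V Opt = \<Union> {\<theta>. congruence_rel V Opt \<theta>}"

definition quot_pos :: "'a set \<Rightarrow> 'a rel \<Rightarrow> 'a set set" where
  "quot_pos V \<theta> = V // \<theta>"

definition quot_opt :: "('a \<Rightarrow> 'a set) \<Rightarrow> 'a rel \<Rightarrow> 'a set \<Rightarrow> 'a set set" where
  "quot_opt Opt \<theta> X = cls \<theta> ` Opt (SOME p. p \<in> X)"

definition sum_pos :: "'a set \<Rightarrow> 'b set \<Rightarrow> ('a \<times> 'b) set" where
  "sum_pos C D = C \<times> D"

definition sum_opt :: "('a \<Rightarrow> 'a set) \<Rightarrow> ('b \<Rightarrow> 'b set) \<Rightarrow> 'a \<times> 'b \<Rightarrow> ('a \<times> 'b) set" where
  "sum_opt OptC OptD pq = (OptC (fst pq) \<times> {snd pq}) \<union> ({fst pq} \<times> OptD (snd pq))"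

definition og_iso :: "'a set \<Rightarrow> ('a \<Rightarrow> 'a set) \<Rightarrow> 'b set \<Rightarrow> ('b \<Rightarrow> 'b set) \<Rightarrow> ('a \<Rightarrow> 'b) \<Rightarrow> bool" where
  "og_iso V1 Opt1 V2 Opt2 f \<longleftrightarrow> bij_betw f V1 V2 \<and> (\<forall>p\<in>V1. Opt2 (f p) = f ` Opt1 p)"

definition og_isomorphic :: "'a set \<Rightarrow> ('a \<Rightarrow> 'a set) \<Rightarrow> 'b set \<Rightarrow> ('b \<Rightarrow> 'b set) \<Rightarrow> bool" where
  "og_isomorphic V1 Opt1 V2 Opt2 \<longleftrightarrow> (\<exists>f. og_iso V1 Opt1 V2 Opt2 f)"

end

theory Submission
  imports Defs
begin

definition bisim :: "'a set \<Rightarrow> ('a \<Rightarrow> 'a set) \<Rightarrow> 'a rel \<Rightarrow> bool" where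
  "bisim V Opt R \<longleftrightarrow> R \<subseteq> V \<times> V \<and> (\<forall>p q. (p,q)\<in>R \<longrightarrow>
     (\<forall>x\<in>Opt p. \<exists>y\<in>Opt q. (x,y)\<in>R) \<and> (\<forall>y\<in>Opt q. \<exists>x\<in>Opt p. (x,y)\<in>R))"

lemma bisim_trancl:
  assumes "bisim V Opt R" shows "bisim V Opt (R\<^sup>+)"
proof -
  have sub: "R\<^sup>+ \<subseteq> V \<times> V" using assms trancl_subset_Sigma unfolding bisim_def by blast
  have "(\<forall>x\<in>Opt p. \<exists>y\<in>Opt q. (x,y)\<in>R\<^sup>+) \<and> (\<forall>y\<in>Opt q. \<exists>x\<in>Opt p. (x,y)\<in>R\<^sup>+)"
    if "(p,q) \<in> R\<^sup>+" for p q
    using that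
  proof (induction rule: trancl_induct)
    case (base y)
    then show ?case using assms unfolding bisim_def by blast
  next
    case (step y z)
    have A: "\<forall>x\<in>Opt y. \<exists>w\<in>Opt z. (x,w)\<in>R" "\<forall>w\<in>Opt z. \<exists>x\<in>Opt y. (x,w)\<in>R"
      using step(2) assms unfolding bisim_def by blast+
    show ?case
    proof (intro conjI ballI)
      fix x assume "x \<in> Opt p"
      then obtain y' where "y' \<in> Opt y" "(x,y') \<in> R\<^sup>+" using step(3) by blast
      then obtain z' where "z' \<in> Opt z" "(y',z') \<in> R" using A by blast
      then show "\<exists>w\<in>Opt z. (x,w)\<in>R\<^sup>+" using \<open>(x,y') \<in> R\<^sup>+\<close> by (meson trancl.trancl_into_trancl)
    next
      fix w assume "w \<in> Opt z"
      then obtain y' where "y' \<in> Opt y" "(y',w) \<in> R" using A by blast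
      then obtain x where "x \<in> Opt p" "(x,y') \<in> R\<^sup>+" using step(3) by blast
      then show "\<exists>x\<in>Opt p. (x,w)\<in>R\<^sup>+" using \<open>(y',w) \<in> R\<close> by (meson trancl.trancl_into_trancl)
    qed
  qed
  then show ?thesis using sub unfolding bisim_def by blast
qed

lemma bisim_equiv_congruence:
  assumes "bisim V Opt R" "equiv V R"
  shows "congruence_rel V Opt R"
  unfolding congruence_rel_def
proof (intro conjI allI impI assms(2))
  fix p q assume pq: "(p,q) \<in> R"
  have A: "\<forall>x\<in>Opt p. \<exists>y\<in>Opt q. (x,y)\<in>R" "\<forall>y\<in>Opt q. \<exists>x\<in>Opt p. (x,y)\<in>R"
    using pq assms(1) unfolding bisim_def by blast+
  show "cls R ` Opt p = cls R ` Opt q"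
  proof
    show "cls R ` Opt p \<subseteq> cls R ` Opt q"
    proof
      fix c assume "c \<in> cls R ` Opt p"
      then obtain x where "x \<in> Opt p" "c = cls R x" by blast
      then obtain y where "y \<in> Opt q" "(x,y) \<in> R" using A by blast
      then have "cls R x = cls R y" using assms(2) equiv_class_eq unfolding cls_def by metis
      then show "c \<in> cls R ` Opt q" using \<open>c = cls R x\<close> \<open>y \<in> Opt q\<close> by blast
    qed
  next
    show "cls R ` Opt q \<subseteq> cls R ` Opt p"
    proof
      fix c assume "c \<in> cls R ` Opt q"
      then obtain y where "y \<in> Opt q" "c = cls R y" by blast
      then obtain x where "x \<in> Opt p" "(x,y) \<in> R" using A by blast
      then have "cls R x = cls R y" using assms(2) equiv_class_eq unfolding cls_def by metis
      then show "c \<in> cls R ` Opt p" using \<open>c = cls R y\<close> \<open>x \<in> Opt p\<close> by blast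
    qed
  qed
qed

lemma congruence_bisim:
  assumes "congruence_rel V Opt R" "\<forall>p\<in>V. Opt p \<subseteq> V"
  shows "bisim V Opt R"
proof -
  have eq: "equiv V R" using assms(1) unfolding congruence_rel_def by blast
  then have sub: "R \<subseteq> V \<times> V" by (simp add: equiv_type)
  have "(\<forall>x\<in>Opt p. \<exists>y\<in>Opt q. (x,y)\<in>R)" if pq: "(p,q) \<in> R" for p q
  proof
    fix x assume x: "x \<in> Opt p"
    have pV: "p \<in> V" "q \<in> V" using pq sub by auto
    have "cls R ` Opt p = cls R ` Opt q" using assms(1) pq unfolding congruence_rel_def by blast
    then obtain y where y: "y \<in> Opt q" "cls R x = cls R y" using x by blast
    have "x \<in> V" "y \<in> V" using x y pV assms(2) by auto
    then have "(x,y) \<in> R" using y(2) eq eq_equiv_class_iff unfolding cls_def by fast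
    then show "\<exists>y\<in>Opt q. (x,y)\<in>R" using y by blast
  qed
  moreover have "(q,p) \<in> R" if "(p,q) \<in> R" for p q using that eq by (meson equiv_def symD)
  ultimately show ?thesis using sub unfolding bisim_def by (meson eq equiv_def symD)
qed

lemma bisim_le_maxcong:
  assumes "bisim V Opt R" "\<forall>p\<in>V. Opt p \<subseteq> V"
  shows "R \<subseteq> maxcong V Opt"
proof -
  define R0 where "R0 = R \<union> R\<inverse> \<union> Id_on V"
  have "bisim V Opt R0"
    using assms unfolding bisim_def R0_def by (auto 0 3) (meson Id_onI subsetD)+
  then have b: "bisim V Opt (R0\<^sup>+)" by (rule bisim_trancl)
  have sub: "R0\<^sup>+ \<subseteq> V \<times> V" using b unfolding bisim_def by blast
  have "refl_on V (R0\<^sup>+)" unfolding refl_on_def using sub R0_def by auto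
  moreover have "sym (R0\<^sup>+)"
  proof -
    have "sym R0" unfolding R0_def sym_def by auto
    then show ?thesis by (rule sym_trancl)
  qed
  moreover have "trans (R0\<^sup>+)" by simp
  ultimately have "equiv V (R0\<^sup>+)" using sub by (simp add: equiv_def)
  then have "congruence_rel V Opt (R0\<^sup>+)" using b bisim_equiv_congruence by blast
  then have "R0\<^sup>+ \<subseteq> maxcong V Opt" unfolding maxcong_def by blast
  moreover have "R \<subseteq> R0\<^sup>+" unfolding R0_def by auto
  ultimately show ?thesis by blast
qed

lemma maxcong_props:
  assumes "\<forall>p\<in>V. Opt p \<subseteq> V"
  shows "bisim V Opt (maxcong V Opt)" "equiv V (maxcong V Opt)" "congruence_rel V Opt (maxcong V Opt)"
proof -
  have cb: "\<And>\<theta>. congruence_rel V Opt \<theta> \<Longrightarrow> bisim V Opt \<theta>" using congruence_bisim assms by blast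
  have le: "\<And>\<theta>. congruence_rel V Opt \<theta> \<Longrightarrow> \<theta> \<subseteq> maxcong V Opt" unfolding maxcong_def by blast
  show b: "bisim V Opt (maxcong V Opt)"
    unfolding bisim_def
  proof (intro conjI allI impI)
    show "maxcong V Opt \<subseteq> V \<times> V" using cb unfolding maxcong_def bisim_def by blast
  next
    fix p q assume "(p,q) \<in> maxcong V Opt"
    then obtain \<theta> where th: "congruence_rel V Opt \<theta>" "(p,q) \<in> \<theta>" unfolding maxcong_def by blast
    then show "\<forall>x\<in>Opt p. \<exists>y\<in>Opt q. (x, y) \<in> maxcong V Opt" "\<forall>y\<in>Opt q. \<exists>x\<in>Opt p. (x, y) \<in> maxcong V Opt"
      using cb[OF th(1)] le[OF th(1)] unfolding bisim_def by blast+
  qed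
  have sub: "maxcong V Opt \<subseteq> V \<times> V" using b unfolding bisim_def by blast
  have idc: "congruence_rel V Opt (Id_on V)"
    unfolding congruence_rel_def by (auto simp: equiv_def refl_on_def sym_def trans_def)
  have "refl_on V (maxcong V Opt)" using le[OF idc] sub unfolding refl_on_def by blast
  moreover have "sym (maxcong V Opt)"
    unfolding sym_def maxcong_def congruence_rel_def equiv_def by (blast dest: symD)
  moreover have "trans (maxcong V Opt)"
  proof -
    have "(maxcong V Opt)\<^sup>+ \<subseteq> maxcong V Opt"
      using bisim_le_maxcong[OF bisim_trancl[OF b] assms] .
    then show ?thesis by (meson trans_def trancl.simps subsetD)
  qed
  ultimately show e: "equiv V (maxcong V Opt)" using sub by (simp add: equiv_def)
  show "congruence_rel V Opt (maxcong V Opt)" using bisim_equiv_congruence[OF b e] .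
qed


lemma cls_mem: "equiv V R \<Longrightarrow> p \<in> V \<Longrightarrow> p \<in> cls R p"
  unfolding cls_def by (meson equiv_class_self)

lemma cls_eq_iff: "equiv V R \<Longrightarrow> p \<in> V \<Longrightarrow> q \<in> V \<Longrightarrow> cls R p = cls R q \<longleftrightarrow> (p,q) \<in> R"
  unfolding cls_def by (rule eq_equiv_class_iff)

lemma in_cls: "q \<in> cls R p \<longleftrightarrow> (p,q) \<in> R" unfolding cls_def by simp

lemma quotient_cls: "V // R = cls R ` V" unfolding quotient_def cls_def by blast

lemma quot_iso:
  assumes O1: "\<forall>p\<in>V1. O1 p \<subseteq> V1" and O2: "\<forall>p\<in>V2. O2 p \<subseteq> V2"
  and fV: "f ` V1 = V2" and fO: "\<forall>p\<in>V1. O2 (f p) = f ` O1 p"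
  shows "og_isomorphic (quot_pos V1 (maxcong V1 O1)) (quot_opt O1 (maxcong V1 O1))
           (quot_pos V2 (maxcong V2 O2)) (quot_opt O2 (maxcong V2 O2))"
proof -
  define M1 where "M1 = maxcong V1 O1"
  define M2 where "M2 = maxcong V2 O2"
  note P1 = maxcong_props[OF O1, folded M1_def]
  note P2 = maxcong_props[OF O2, folded M2_def]
  have sub1: "M1 \<subseteq> V1 \<times> V1" using P1(2) equiv_type by blast
  have sub2: "M2 \<subseteq> V2 \<times> V2" using P2(2) equiv_type by blast
  have fwd: "(f p, f q) \<in> M2" if "(p,q) \<in> M1" for p q
  proof -
    define T where "T = (\<lambda>(p,q). (f p, f q)) ` M1"
    have "bisim V2 O2 T"
      unfolding bisim_def
    proof (intro conjI allI impI)
      show "T \<subseteq> V2 \<times> V2" using sub1 fV unfolding T_def by auto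
    next
      fix a b assume "(a,b) \<in> T"
      then obtain p q where pq: "(p,q) \<in> M1" "a = f p" "b = f q" unfolding T_def by auto
      have pV: "p \<in> V1" "q \<in> V1" using pq sub1 by auto
      have A: "\<forall>x\<in>O1 p. \<exists>y\<in>O1 q. (x,y)\<in>M1" "\<forall>y\<in>O1 q. \<exists>x\<in>O1 p. (x,y)\<in>M1"
        using P1(1) pq(1) unfolding bisim_def by blast+
      show "\<forall>x\<in>O2 a. \<exists>y\<in>O2 b. (x, y) \<in> T"
        using A(1) pq pV fO unfolding T_def by fastforce
      show "\<forall>y\<in>O2 b. \<exists>x\<in>O2 a. (x, y) \<in> T"
        using A(2) pq pV fO unfolding T_def by fastforce
    qed
    then have "T \<subseteq> M2" using bisim_le_maxcong O2 unfolding M2_def by blast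
    then show ?thesis using that unfolding T_def by auto
  qed
  have bwd: "(p, q) \<in> M1" if "p \<in> V1" "q \<in> V1" "(f p, f q) \<in> M2" for p q
  proof -
    define T where "T = {(p,q). p \<in> V1 \<and> q \<in> V1 \<and> (f p, f q) \<in> M2}"
    have "bisim V1 O1 T"
      unfolding bisim_def
    proof (intro conjI allI impI)
      show "T \<subseteq> V1 \<times> V1" unfolding T_def by auto
    next
      fix p q assume "(p,q) \<in> T"
      then have pq: "p \<in> V1" "q \<in> V1" "(f p, f q) \<in> M2" unfolding T_def by auto
      have A: "\<forall>x\<in>O2 (f p). \<exists>y\<in>O2 (f q). (x,y)\<in>M2" "\<forall>y\<in>O2 (f q). \<exists>x\<in>O2 (f p). (x,y)\<in>M2"
        using P2(1) pq(3) unfolding bisim_def by blast+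
      show "\<forall>x\<in>O1 p. \<exists>y\<in>O1 q. (x, y) \<in> T"
      proof
        fix x assume x: "x \<in> O1 p"
        then have "f x \<in> O2 (f p)" using fO pq by auto
        then obtain y' where "y' \<in> O2 (f q)" "(f x, y') \<in> M2" using A by blast
        then obtain y where "y \<in> O1 q" "y' = f y" using fO pq by auto
        then show "\<exists>y\<in>O1 q. (x, y) \<in> T" unfolding T_def using x O1 pq \<open>(f x, y') \<in> M2\<close> by blast
      qed
      show "\<forall>y\<in>O1 q. \<exists>x\<in>O1 p. (x, y) \<in> T"
      proof
        fix y assume y: "y \<in> O1 q"
        then have "f y \<in> O2 (f q)" using fO pq by auto
        then obtain x' where "x' \<in> O2 (f p)" "(x', f y) \<in> M2" using A by blast
        then obtain x where "x \<in> O1 p" "x' = f x" using fO pq by auto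
        then show "\<exists>x\<in>O1 p. (x, y) \<in> T" unfolding T_def using y O1 pq \<open>(x', f y) \<in> M2\<close> by blast
      qed
    qed
    then have "T \<subseteq> M1" using bisim_le_maxcong O1 unfolding M1_def by blast
    then show ?thesis using that unfolding T_def by auto
  qed
  define g where "g X = cls M2 (f (SOME p. p \<in> X))" for X
  have fV1: "f p \<in> V2" if "p \<in> V1" for p using fV that by blast
  have gc: "g (cls M1 p) = cls M2 (f p)" if p: "p \<in> V1" for p
  proof -
    have "\<exists>s. s \<in> cls M1 p" using cls_mem[OF P1(2) p] by blast
    then have "(SOME s. s \<in> cls M1 p) \<in> cls M1 p" by (rule someI_ex)
    then have s: "(p, SOME s. s \<in> cls M1 p) \<in> M1" by (simp add: in_cls)
    then have "(SOME s. s \<in> cls M1 p) \<in> V1" using sub1 by auto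
    then show ?thesis unfolding g_def using fwd[OF s] P2(2) fV1 p cls_eq_iff by metis
  qed
  have "og_iso (V1 // M1) (quot_opt O1 M1) (V2 // M2) (quot_opt O2 M2) g"
    unfolding og_iso_def
  proof (intro conjI ballI)
    show "bij_betw g (V1 // M1) (V2 // M2)"
      unfolding bij_betw_def
    proof
      show "inj_on g (V1 // M1)"
      proof (rule inj_onI)
        fix X Y assume "X \<in> V1 // M1" "Y \<in> V1 // M1" "g X = g Y"
        then obtain p q where pq: "p \<in> V1" "q \<in> V1" "X = cls M1 p" "Y = cls M1 q"
          by (auto simp: quotient_cls)
        then have "cls M2 (f p) = cls M2 (f q)" using gc \<open>g X = g Y\<close> by metis
        then have "(f p, f q) \<in> M2" using cls_eq_iff[OF P2(2)] fV1 pq by blast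
        then have "(p,q) \<in> M1" using bwd pq by blast
        then show "X = Y" using pq cls_eq_iff[OF P1(2)] by blast
      qed
      show "g ` (V1 // M1) = V2 // M2"
        unfolding quotient_cls using gc fV by (auto simp: image_image)
    qed
  next
    fix X assume "X \<in> V1 // M1"
    then obtain p where p: "p \<in> V1" "X = cls M1 p" by (auto simp: quotient_cls)
    define s where "s = (SOME s. s \<in> X)"
    have "\<exists>s. s \<in> X" using cls_mem[OF P1(2) p(1)] p by blast
    then have "s \<in> X" unfolding s_def by (rule someI_ex)
    then have ps: "(p,s) \<in> M1" using p by (simp add: in_cls)
    then have sV: "s \<in> V1" using sub1 by auto
    define t where "t = (SOME t. t \<in> cls M2 (f p))"
    have "\<exists>t. t \<in> cls M2 (f p)" using cls_mem[OF P2(2) fV1[OF p(1)]] by blast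
    then have "t \<in> cls M2 (f p)" unfolding t_def by (rule someI_ex)
    then have pt: "(f p, t) \<in> M2" by (simp add: in_cls)
    have "quot_opt O2 M2 (g X) = cls M2 ` O2 t"
      unfolding quot_opt_def using gc p t_def by simp
    also have "\<dots> = cls M2 ` O2 (f p)"
      using P2(3) pt unfolding congruence_rel_def by metis
    also have "\<dots> = cls M2 ` O2 (f s)"
      using P2(3) fwd[OF ps] unfolding congruence_rel_def by metis
    also have "\<dots> = (\<lambda>x. cls M2 (f x)) ` O1 s" using fO sV by (simp add: image_image)
    also have "\<dots> = g ` cls M1 ` O1 s"
      using gc O1 sV by (auto simp: image_image intro!: image_cong)
    also have "\<dots> = g ` quot_opt O1 M1 X" unfolding quot_opt_def s_def by simp
    finally show "quot_opt O2 M2 (g X) = g ` quot_opt O1 M1 X" .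
  qed
  then show ?thesis unfolding og_isomorphic_def quot_pos_def M1_def M2_def by blast
qed


lemma quot_opt_cls:
  assumes "\<forall>p\<in>V. Opt p \<subseteq> V" "c \<in> V"
  shows "quot_opt Opt (maxcong V Opt) (cls (maxcong V Opt) c) = cls (maxcong V Opt) ` Opt c"
proof -
  let ?M = "maxcong V Opt"
  note P = maxcong_props[OF assms(1)]
  have "\<exists>s. s \<in> cls ?M c" using cls_mem[OF P(2) assms(2)] by blast
  then have "(SOME s. s \<in> cls ?M c) \<in> cls ?M c" by (rule someI_ex)
  then have "(c, SOME s. s \<in> cls ?M c) \<in> ?M" by (simp add: in_cls)
  then show ?thesis using P(3) unfolding quot_opt_def congruence_rel_def by metis
qed

lemma quot_opt_sub:
  assumes "\<forall>p\<in>V. Opt p \<subseteq> V"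
  shows "\<forall>X\<in>quot_pos V (maxcong V Opt). quot_opt Opt (maxcong V Opt) X \<subseteq> quot_pos V (maxcong V Opt)"
  using quot_opt_cls[OF assms] assms unfolding quot_pos_def quotient_cls by (auto intro: imageI dest!: bspec subsetD)

theorem mainTheorem20:
  fixes C :: "'a set" and OptC :: "'a \<Rightarrow> 'a set"
    and D :: "'b set" and OptD :: "'b \<Rightarrow> 'b set"
  assumes "optiongraph C OptC" and "optiongraph D OptD"
  defines "S \<equiv> sum_pos C D" and "OptS \<equiv> sum_opt OptC OptD"
  defines "Cq \<equiv> quot_pos C (maxcong C OptC)" and "OptCq \<equiv> quot_opt OptC (maxcong C OptC)"
  defines "Dq \<equiv> quot_pos D (maxcong D OptD)" and "OptDq \<equiv> quot_opt OptD (maxcong D OptD)"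
  defines "E \<equiv> sum_pos Cq Dq" and "OptE \<equiv> sum_opt OptCq OptDq"
  shows "og_isomorphic
           (quot_pos S (maxcong S OptS)) (quot_opt OptS (maxcong S OptS))
           (quot_pos E (maxcong E OptE)) (quot_opt OptE (maxcong E OptE))"
proof (rule quot_iso)
  have oC: "\<forall>p\<in>C. OptC p \<subseteq> C" and oD: "\<forall>p\<in>D. OptD p \<subseteq> D"
    using assms(1,2) unfolding optiongraph_def by auto
  define f where "f = (\<lambda>(c,d). (cls (maxcong C OptC) c, cls (maxcong D OptD) d))"
  show "\<forall>p\<in>S. OptS p \<subseteq> S" using oC oD unfolding S_def OptS_def sum_pos_def sum_opt_def by fastforce
  have qC: "\<forall>X\<in>Cq. OptCq X \<subseteq> Cq" using quot_opt_sub[OF oC] unfolding Cq_def OptCq_def .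
  have qD: "\<forall>X\<in>Dq. OptDq X \<subseteq> Dq" using quot_opt_sub[OF oD] unfolding Dq_def OptDq_def .
  show "\<forall>p\<in>E. OptE p \<subseteq> E" using qC qD unfolding E_def OptE_def sum_pos_def sum_opt_def by fastforce
  show "f ` S = E" unfolding f_def S_def E_def sum_pos_def Cq_def Dq_def quot_pos_def quotient_cls
    by (auto simp: image_iff)
  show "\<forall>p\<in>S. OptE (f p) = f ` OptS p"
  proof
    fix p assume "p \<in> S"
    then obtain c d where p: "p = (c,d)" "c \<in> C" "d \<in> D" unfolding S_def sum_pos_def by auto
    show "OptE (f p) = f ` OptS p"
      unfolding p OptE_def OptS_def f_def sum_opt_def OptCq_def OptDq_def
      using quot_opt_cls[OF oC p(2)] quot_opt_cls[OF oD p(3)]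
      by (auto simp: image_Un image_iff)
  qed
qed

end
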